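(* For any probability distributions $\mathbf{p},\mathbf{q}$ on $G_\Delta$ (i.e. $\mathbf{p},\mathbf{q}\in\mathbb{R}_{\ge0}^{G_\Delta}$ with $\|\mathbf{p}\|_1=\|\mathbf{q}\|_1=1$) and any $\sigma>0$, $\mathrm{KL}(\tilde H^\sigma_{\mathbf{p}}\,\|\,\tilde H^\sigma_{\mathbf{q}})\le\frac{\mathrm{EMD}(\mathbf{p},\mathbf{q})}{2\sigma^2}$.
   Context: $G_\Delta=\{(i/\Delta,j/\Delta):i,j\in\{0,\dots,\Delta-1\}\}$, $\tilde G_\Delta=\{(i/\Delta,j/\Delta):i,j\in\mathbb{Z}\}$. $\tilde H^\sigma_{\mathbf{p}}(a)=\sum_{a'\in G_\Delta}\frac1Z e^{-\|a-a'\|_2^2/(2\sigma^2)}\mathbf{p}(a')$ for $a\in\tilde G_\Delta$, with $Z=\sum_{d\in\tilde G_\Delta}e^{-\|d\|_2^2/(2\sigma^2)}$. $\mathrm{KL}(P\|Q)=\sum_a P(a)\ln(P(a)/Q(a))$. $\mathrm{EMD}(\mathbf{p},\mathbf{q})=\min_\gamma\sum_{x,y\in G_\Delta}\gamma(x,y)\|x-y\|_1$ over nonnegative couplings $\gamma$ with marginals $\mathbf{p},\mathbf{q}$. *)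

theory Defs
  imports "HOL-Analysis.Analysis"
begin

definition grid :: "nat \<Rightarrow> (real \<times> real) set" where
  "grid D = {(real i / real D, real j / real D) | i j. i < D \<and> j < D}"

definition grid_Z :: "nat \<Rightarrow> (real \<times> real) set" where
  "grid_Z D = {(real_of_int i / real D, real_of_int j / real D) | i j. True}"

definition sqdist2 :: "real \<times> real \<Rightarrow> real \<times> real \<Rightarrow> real" where
  "sqdist2 a b = (fst a - fst b)^2 + (snd a - snd b)^2"

definition l1dist :: "real \<times> real \<Rightarrow> real \<times> real \<Rightarrow> real" where
  "l1dist a b = \<bar>fst a - fst b\<bar> + \<bar>snd a - snd b\<bar>"

definition gaussZ :: "nat \<Rightarrow> real \<Rightarrow> real" where
  "gaussZ D \<sigma> = (\<Sum>\<^sub>\<infinity>d\<in>grid_Z D. exp (- sqdist2 d (0,0) / (2 * \<sigma>^2)))"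

definition Htilde :: "nat \<Rightarrow> real \<Rightarrow> (real \<times> real \<Rightarrow> real) \<Rightarrow> real \<times> real \<Rightarrow> real" where
  "Htilde D \<sigma> p a = (\<Sum>a'\<in>grid D. (1 / gaussZ D \<sigma>) * exp (- sqdist2 a a' / (2 * \<sigma>^2)) * p a')"

definition KL :: "('a \<Rightarrow> real) \<Rightarrow> ('a \<Rightarrow> real) \<Rightarrow> 'a set \<Rightarrow> real" where
  "KL P Q A = (\<Sum>\<^sub>\<infinity>a\<in>A. P a * ln (P a / Q a))"

definition EMD :: "nat \<Rightarrow> (real \<times> real \<Rightarrow> real) \<Rightarrow> (real \<times> real \<Rightarrow> real) \<Rightarrow> real" where
  "EMD D p q = Inf {(\<Sum>(x,y)\<in>grid D \<times> grid D. \<gamma> (x,y) * l1dist x y) | \<gamma>.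
      (\<forall>x\<in>grid D. \<forall>y\<in>grid D. \<gamma> (x,y) \<ge> 0) \<and>
      (\<forall>x\<in>grid D. (\<Sum>y\<in>grid D. \<gamma> (x,y)) = p x) \<and>
      (\<forall>y\<in>grid D. (\<Sum>x\<in>grid D. \<gamma> (x,y)) = q y)}"

end

theory Submission
  imports Defs
begin


lemma has_sum_finsum:
  fixes f :: "'i \<Rightarrow> 'a \<Rightarrow> real"
  assumes "finite I" "\<And>i. i \<in> I \<Longrightarrow> (f i has_sum S i) A"
  shows "((\<lambda>a. \<Sum>i\<in>I. f i a) has_sum (\<Sum>i\<in>I. S i)) A"
  using assms
proof (induction I rule: finite_induct)
  case empty then show ?case by simp
next
  case (insert x F)
  then show ?case by (simp add: has_sum_add)
qed

lemma gauss_nat_summable: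
  fixes c :: real assumes "c > 0"
  shows "summable (\<lambda>n::nat. exp (- c * real n ^ 2) * (1 + real n))"
proof (rule summable_comparison_test'[where g = "\<lambda>n. exp (-1) ^ n" and N = "nat \<lceil>2 / c\<rceil>"])
  show "summable (\<lambda>n. exp (-1::real) ^ n)" by (rule summable_geometric) simp
  fix n :: nat assume n: "nat \<lceil>2 / c\<rceil> \<le> n"
  have "2 / c \<le> real n" using n by linarith
  hence "2 \<le> c * real n" using assms by (simp add: field_simps)
  hence h: "real n - c * real n ^ 2 \<le> - real n"
  proof -
    have "2 * real n \<le> (c * real n) * real n" using \<open>2 \<le> c * real n\<close> by (intro mult_right_mono) auto
    thus ?thesis by (simp add: power2_eq_square algebra_simps)
  qed
  have "norm (exp (- c * real n ^ 2) * (1 + real n)) = exp (- c * real n ^ 2) * (1 + real n)"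
    by simp
  also have "\<dots> \<le> exp (- c * real n ^ 2) * exp (real n)"
    by (intro mult_left_mono) (auto simp: exp_ge_add_one_self add.commute)
  also have "\<dots> = exp (real n - c * real n ^ 2)" by (simp add: exp_add[symmetric])
  also have "\<dots> \<le> exp (- real n)" using h by simp
  also have "\<dots> = exp (-1) ^ n" by (simp add: exp_of_nat_mult[symmetric])
  finally show "norm (exp (- c * real n ^ 2) * (1 + real n)) \<le> exp (- 1) ^ n" .
qed

lemma gauss_int_summable:
  fixes c :: real assumes "c > 0"
  shows "(\<lambda>i::int. exp (- c * real_of_int i ^ 2) * (1 + \<bar>real_of_int i\<bar>)) summable_on UNIV"
proof -
  define F where "F = (\<lambda>i::int. exp (- c * real_of_int i ^ 2) * (1 + \<bar>real_of_int i\<bar>))"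
  have U: "(UNIV::int set) = range int \<union> range (\<lambda>n::nat. - int n)"
  proof (intro set_eqI iffI)
    fix i :: int show "i \<in> range int \<union> range (\<lambda>n::nat. - int n)"
      by (cases i rule: int_cases) (auto intro!: image_eqI[where x="Suc _"])
  qed auto
  have s: "summable (\<lambda>n::nat. exp (- c * real n ^ 2) * (1 + real n))"
    using gauss_nat_summable[OF assms] .
  have "(F \<circ> int) summable_on UNIV"
    by (subst summable_on_UNIV_nonneg_real_iff) (use s in \<open>auto simp: F_def o_def\<close>)
  hence 1: "F summable_on range int" by (subst summable_on_reindex) (auto simp: inj_on_def)
  have "(F \<circ> (\<lambda>n::nat. - int n)) summable_on UNIV"
    by (subst summable_on_UNIV_nonneg_real_iff) (use s in \<open>auto simp: F_def o_def\<close>)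
  hence 2: "F summable_on range (\<lambda>n::nat. - int n)" by (subst summable_on_reindex) (auto simp: inj_on_def)
  have "F summable_on (range int \<union> range (\<lambda>n::nat. - int n))"
    by (rule summable_on_union[OF 1 2])
  thus ?thesis using U by (simp add: F_def)
qed

lemma gauss_int2_summable:
  fixes c :: real assumes "c > 0"
  shows "(\<lambda>(i::int, j::int). (exp (- c * real_of_int i ^ 2) * (1 + \<bar>real_of_int i\<bar>)) *
           (exp (- c * real_of_int j ^ 2) * (1 + \<bar>real_of_int j\<bar>))) summable_on UNIV"
proof -
  define F where "F = (\<lambda>i::int. exp (- c * real_of_int i ^ 2) * (1 + \<bar>real_of_int i\<bar>))"
  have sF: "F summable_on UNIV" unfolding F_def by (rule gauss_int_summable[OF assms])
  have "(\<lambda>p. F (fst p) * F (snd p)) summable_on Sigma UNIV (\<lambda>_. UNIV)"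
  proof (rule summable_on_SigmaI[where g = "\<lambda>i. F i * infsum F UNIV"])
    fix i :: int
    show "((\<lambda>j. F (fst (i, j)) * F (snd (i, j))) has_sum F i * infsum F UNIV) UNIV"
      using has_sum_cmult_right[OF has_sum_infsum[OF sF], of "F i"] by simp
  next
    show "(\<lambda>i. F i * infsum F UNIV) summable_on UNIV"
      using summable_on_cmult_left[OF sF] by simp
  next
    fix i j show "0 \<le> F (fst (i, j)) * F (snd (i, j))" by (simp add: F_def)
  qed
  thus ?thesis by (simp add: F_def case_prod_unfold)
qed

lemma gridZ_range: "grid_Z D = range (\<lambda>(i::int, j::int). (real_of_int i / real D, real_of_int j / real D))"
  by (auto simp: grid_Z_def)

lemma gauss_dom_summable:
  assumes D: "D > 0" and s: "s > 0"
  shows "(\<lambda>d. exp (- sqdist2 d (0,0) / s) * (1 + \<bar>fst d\<bar> + \<bar>snd d\<bar>)) summable_on grid_Z D"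
proof -
  define \<phi> where "\<phi> = (\<lambda>(i::int, j::int). (real_of_int i / real D, real_of_int j / real D))"
  define c where "c = 1 / (real D ^ 2 * s)"
  have c: "c > 0" using D s by (simp add: c_def)
  have inj: "inj \<phi>" using D by (auto simp: inj_def \<phi>_def)
  have dom: "(\<lambda>(i::int, j::int). (exp (- c * real_of_int i ^ 2) * (1 + \<bar>real_of_int i\<bar>)) *
           (exp (- c * real_of_int j ^ 2) * (1 + \<bar>real_of_int j\<bar>))) summable_on UNIV"
    by (rule gauss_int2_summable[OF c])
  have "((\<lambda>d. exp (- sqdist2 d (0,0) / s) * (1 + \<bar>fst d\<bar> + \<bar>snd d\<bar>)) \<circ> \<phi>) summable_on UNIV"
  proof (rule summable_on_comparison_test[OF dom])
    fix p :: "int \<times> int"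
    obtain i j where p: "p = (i, j)" by (cases p)
    have D1: "real D \<ge> 1" using D by simp
    have e: "exp (- sqdist2 (\<phi> p) (0,0) / s) = exp (- c * real_of_int i ^ 2) * exp (- c * real_of_int j ^ 2)"
      unfolding exp_add[symmetric] using D s
      by (simp add: p \<phi>_def sqdist2_def c_def power_divide field_simps)
    have a1: "\<bar>real_of_int i / real D\<bar> \<le> \<bar>real_of_int i\<bar>"
      using D1 by (simp add: abs_divide divide_le_eq mult_le_cancel_left1 abs_mult)
    have a2: "\<bar>real_of_int j / real D\<bar> \<le> \<bar>real_of_int j\<bar>"
      using D1 by (simp add: abs_divide divide_le_eq mult_le_cancel_left1 abs_mult)
    have b: "1 + \<bar>real_of_int i / real D\<bar> + \<bar>real_of_int j / real D\<bar> \<le> (1 + \<bar>real_of_int i\<bar>) * (1 + \<bar>real_of_int j\<bar>)"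
      using a1 a2 by (simp add: algebra_simps) (smt (verit) abs_ge_zero mult_nonneg_nonneg)
    have "exp (- sqdist2 (\<phi> p) (0,0) / s) * (1 + \<bar>fst (\<phi> p)\<bar> + \<bar>snd (\<phi> p)\<bar>)
        \<le> (exp (- c * real_of_int i ^ 2) * exp (- c * real_of_int j ^ 2)) * ((1 + \<bar>real_of_int i\<bar>) * (1 + \<bar>real_of_int j\<bar>))"
      unfolding e by (intro mult_left_mono) (use b in \<open>auto simp: p \<phi>_def\<close>)
    thus "((\<lambda>d. exp (- sqdist2 d (0,0) / s) * (1 + \<bar>fst d\<bar> + \<bar>snd d\<bar>)) \<circ> \<phi>) p
       \<le> (case p of (i, j) \<Rightarrow> exp (- c * (real_of_int i)\<^sup>2) * (1 + \<bar>real_of_int i\<bar>) *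
                          (exp (- c * (real_of_int j)\<^sup>2) * (1 + \<bar>real_of_int j\<bar>)))"
      by (simp add: p algebra_simps)
    show "0 \<le> ((\<lambda>d. exp (- sqdist2 d (0,0) / s) * (1 + \<bar>fst d\<bar> + \<bar>snd d\<bar>)) \<circ> \<phi>) p"
      by simp
  qed
  hence "(\<lambda>d. exp (- sqdist2 d (0,0) / s) * (1 + \<bar>fst d\<bar> + \<bar>snd d\<bar>)) summable_on range \<phi>"
    using inj by (subst summable_on_reindex) auto
  thus ?thesis by (simp add: gridZ_range \<phi>_def)
qed



lemma gridZ_neg: assumes "d \<in> grid_Z D" shows "(- fst d, - snd d) \<in> grid_Z D"
proof -
  obtain i j where d: "d = (real_of_int i / real D, real_of_int j / real D)" using assms unfolding grid_Z_def by blast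
  show ?thesis unfolding grid_Z_def
    by (rule CollectI, rule exI[of _ "-i"], rule exI[of _ "-j"]) (simp add: d)
qed

lemma gridZ_add: assumes "d \<in> grid_Z D" "x \<in> grid_Z D" shows "(fst d + fst x, snd d + snd x) \<in> grid_Z D"
proof -
  obtain i j where d: "d = (real_of_int i / real D, real_of_int j / real D)" using assms unfolding grid_Z_def by blast
  obtain i' j' where x: "x = (real_of_int i' / real D, real_of_int j' / real D)" using assms unfolding grid_Z_def by blast
  show ?thesis unfolding grid_Z_def
    by (rule CollectI, rule exI[of _ "i+i'"], rule exI[of _ "j+j'"]) (simp add: d x add_divide_distrib)
qed

lemma gridZ_sub: assumes "d \<in> grid_Z D" "x \<in> grid_Z D" shows "(fst d - fst x, snd d - snd x) \<in> grid_Z D"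
proof -
  obtain i j where d: "d = (real_of_int i / real D, real_of_int j / real D)" using assms unfolding grid_Z_def by blast
  obtain i' j' where x: "x = (real_of_int i' / real D, real_of_int j' / real D)" using assms unfolding grid_Z_def by blast
  show ?thesis unfolding grid_Z_def
    by (rule CollectI, rule exI[of _ "i-i'"], rule exI[of _ "j-j'"]) (simp add: d x diff_divide_distrib)
qed

lemma gauss_moments:
  assumes D: "D > 0" and s: "s > 0"
  shows "(\<lambda>d. exp (- sqdist2 d (0,0) / s)) summable_on grid_Z D"
    and "((\<lambda>d. exp (- sqdist2 d (0,0) / s) * fst d) has_sum 0) (grid_Z D)"
    and "((\<lambda>d. exp (- sqdist2 d (0,0) / s) * snd d) has_sum 0) (grid_Z D)"
proof -
  let ?e = "\<lambda>d. exp (- sqdist2 d (0,0) / s)"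
  let ?G = "\<lambda>d. exp (- sqdist2 d (0,0) / s) * (1 + \<bar>fst d\<bar> + \<bar>snd d\<bar>)"
  have dom: "Infinite_Sum.abs_summable_on ?G (grid_Z D)"
    by (rule summable_on_iff_abs_summable_on_real[THEN iffD1, OF gauss_dom_summable[OF D s]])
  have sm: "f summable_on grid_Z D" if "\<And>d. \<bar>f d\<bar> \<le> ?G d" for f
  proof (rule summable_on_iff_abs_summable_on_real[THEN iffD2], rule Infinite_Sum.abs_summable_on_comparison_test[OF dom])
    fix d
    have "\<bar>f d\<bar> \<le> ?G d" by (rule that)
    moreover have "?G d \<ge> 0" by simp
    ultimately show "norm (f d) \<le> norm (?G d)" by simp
  qed
  show "?e summable_on grid_Z D"
    by (rule sm) (simp add: mult_le_cancel_left1)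
  have bij: "bij_betw (\<lambda>d. (- fst d, - snd d)) (grid_Z D) (grid_Z D)"
    by (rule bij_betw_byWitness[where f'="\<lambda>d. (- fst d, - snd d)"]) (auto intro: gridZ_neg)
  have sq: "sqdist2 (- fst d, - snd d) (0,0) = sqdist2 d (0,0)" for d
    by (simp add: sqdist2_def)
  have zero: "infsum f (grid_Z D) = 0" if "\<And>d. f (- fst d, - snd d) = - f d" for f :: "real \<times> real \<Rightarrow> real"
  proof -
    have "infsum f (grid_Z D) = infsum (\<lambda>d. f (- fst d, - snd d)) (grid_Z D)"
      using infsum_reindex_bij_betw[OF bij, of f] by simp
    also have "\<dots> = - infsum f (grid_Z D)" by (simp add: that infsum_uminus)
    finally show ?thesis by simp
  qed
  show "((\<lambda>d. ?e d * fst d) has_sum 0) (grid_Z D)"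
  proof -
    have "(\<lambda>d. ?e d * fst d) summable_on grid_Z D"
      by (rule sm) (simp add: abs_mult)
    moreover have "infsum (\<lambda>d. ?e d * fst d) (grid_Z D) = 0" by (rule zero) (simp add: sq)
    ultimately show ?thesis by (simp add: has_sum_iff)
  qed
  show "((\<lambda>d. ?e d * snd d) has_sum 0) (grid_Z D)"
  proof -
    have "(\<lambda>d. ?e d * snd d) summable_on grid_Z D"
      by (rule sm) (simp add: abs_mult)
    moreover have "infsum (\<lambda>d. ?e d * snd d) (grid_Z D) = 0" by (rule zero) (simp add: sq)
    ultimately show ?thesis by (simp add: has_sum_iff)
  qed
qed

lemma gauss_shift:
  assumes D: "D > 0" and s: "s > 0" and x: "x \<in> grid_Z D"
  shows "((\<lambda>a. exp (- sqdist2 a x / s) * (c0 + c1 * (fst a - fst x) + c2 * (snd a - snd x)))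
           has_sum (c0 * (\<Sum>\<^sub>\<infinity>d\<in>grid_Z D. exp (- sqdist2 d (0,0) / s)))) (grid_Z D)"
proof -
  let ?e = "\<lambda>d. exp (- sqdist2 d (0,0) / s)"
  note m = gauss_moments[OF D s]
  have "((\<lambda>d. c0 * ?e d + c1 * (?e d * fst d) + c2 * (?e d * snd d)) has_sum
          (c0 * infsum ?e (grid_Z D) + c1 * 0 + c2 * 0)) (grid_Z D)"
    by (intro has_sum_add has_sum_cmult_right m(2,3) has_sum_infsum m(1))
  hence h: "((\<lambda>d. ?e d * (c0 + c1 * fst d + c2 * snd d)) has_sum
          (c0 * infsum ?e (grid_Z D))) (grid_Z D)"
    by (simp add: algebra_simps)
  have "((\<lambda>a. exp (- sqdist2 a x / s) * (c0 + c1 * (fst a - fst x) + c2 * (snd a - snd x)))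
           has_sum (c0 * infsum ?e (grid_Z D))) (grid_Z D) =
        ((\<lambda>d. ?e d * (c0 + c1 * fst d + c2 * snd d)) has_sum (c0 * infsum ?e (grid_Z D))) (grid_Z D)"
    by (rule has_sum_reindex_bij_witness[where i="\<lambda>d. (fst d + fst x, snd d + snd x)"
        and j="\<lambda>a. (fst a - fst x, snd a - snd x)"])
      (auto simp: gridZ_add gridZ_sub x sqdist2_def)
  thus ?thesis using h by simp
qed



lemma log_sum:
  fixes w \<alpha> \<beta> :: "'i \<Rightarrow> real"
  assumes I: "finite I" and w: "\<And>i. i \<in> I \<Longrightarrow> w i \<ge> 0"
    and a: "\<And>i. i \<in> I \<Longrightarrow> \<alpha> i > 0" and b: "\<And>i. i \<in> I \<Longrightarrow> \<beta> i > 0"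
  shows "(\<Sum>i\<in>I. w i * \<alpha> i) * ln ((\<Sum>i\<in>I. w i * \<alpha> i) / (\<Sum>i\<in>I. w i * \<beta> i))
         \<le> (\<Sum>i\<in>I. w i * \<alpha> i * ln (\<alpha> i / \<beta> i))"
proof -
  define A where "A = (\<Sum>i\<in>I. w i * \<alpha> i)"
  define B where "B = (\<Sum>i\<in>I. w i * \<beta> i)"
  have wa: "w i * \<alpha> i \<ge> 0" if "i \<in> I" for i using w[OF that] a[OF that] by simp
  have wb: "w i * \<beta> i \<ge> 0" if "i \<in> I" for i using w[OF that] b[OF that] by simp
  show ?thesis
  proof (cases "A = 0")
    case True
    hence "\<forall>i\<in>I. w i * \<alpha> i = 0" using sum_nonneg_eq_0_iff[OF I, of "\<lambda>i. w i * \<alpha> i"] wa unfolding A_def by simp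
    hence "\<forall>i\<in>I. w i = 0" using a by (simp add: less_imp_neq[THEN not_sym])
    thus ?thesis by simp
  next
    case False
    have "A \<ge> 0" unfolding A_def by (rule sum_nonneg) (rule wa)
    hence A0: "A > 0" using False by linarith
    have B0: "B > 0"
    proof (rule ccontr)
      assume "\<not> B > 0"
      moreover have "B \<ge> 0" unfolding B_def by (rule sum_nonneg) (rule wb)
      ultimately have "B = 0" by linarith
      hence "\<forall>i\<in>I. w i * \<beta> i = 0" using sum_nonneg_eq_0_iff[OF I, of "\<lambda>i. w i * \<beta> i"] wb unfolding B_def by simp
      hence "\<forall>i\<in>I. w i = 0" using b by (simp add: less_imp_neq[THEN not_sym])
      hence "A = 0" unfolding A_def by simp
      thus False using False by simp
    qed
    have tm: "w i * \<alpha> i * (ln (A / B) - ln (\<alpha> i / \<beta> i)) \<le> w i * \<beta> i * (A / B) - w i * \<alpha> i"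
      if i: "i \<in> I" for i
    proof -
      have ai: "\<alpha> i > 0" and bi: "\<beta> i > 0" using a[OF i] b[OF i] by auto
      have x: "\<beta> i * A / (\<alpha> i * B) > 0" using ai bi A0 B0 by simp
      have "ln (A / B) - ln (\<alpha> i / \<beta> i) = ln (\<beta> i * A / (\<alpha> i * B))"
        using ai bi A0 B0 by (simp add: ln_div ln_mult)
      also have "\<dots> \<le> \<beta> i * A / (\<alpha> i * B) - 1" by (rule ln_le_minus_one[OF x])
      finally have "w i * \<alpha> i * (ln (A / B) - ln (\<alpha> i / \<beta> i)) \<le> w i * \<alpha> i * (\<beta> i * A / (\<alpha> i * B) - 1)"
        by (intro mult_left_mono) (use wa[OF i] in auto)
      also have "\<dots> = w i * \<beta> i * (A / B) - w i * \<alpha> i" using ai by (simp add: field_simps)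
      finally show ?thesis .
    qed
    have "(\<Sum>i\<in>I. w i * \<alpha> i * (ln (A / B) - ln (\<alpha> i / \<beta> i))) \<le> (\<Sum>i\<in>I. w i * \<beta> i * (A / B) - w i * \<alpha> i)"
      by (rule sum_mono) (rule tm)
    also have "\<dots> = B * (A / B) - A"
    proof -
      have eq: "(\<Sum>i\<in>I. w i * \<beta> i * (A / B)) = B * (A / B)" unfolding B_def by (rule sum_distrib_right[symmetric])
      show ?thesis by (simp only: sum_subtractf eq A_def[symmetric])
    qed
    also have "\<dots> = 0" using B0 by simp
    moreover have "(\<Sum>i\<in>I. w i * \<alpha> i * (ln (A / B) - ln (\<alpha> i / \<beta> i))) =
       A * ln (A / B) - (\<Sum>i\<in>I. w i * \<alpha> i * ln (\<alpha> i / \<beta> i))"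
      unfolding A_def by (simp add: right_diff_distrib sum_subtractf sum_distrib_right)
    ultimately have "A * ln (A / B) - (\<Sum>i\<in>I. w i * \<alpha> i * ln (\<alpha> i / \<beta> i)) \<le> 0"
      by linarith
    thus ?thesis unfolding A_def B_def by simp
  qed
qed



lemma grid_image: "grid D = (\<lambda>(i, j). (real i / real D, real j / real D)) ` ({..<D} \<times> {..<D})"
  unfolding grid_def by auto

lemma grid_finite: "finite (grid D)"
  unfolding grid_image by simp

lemma grid_sub: "grid D \<subseteq> grid_Z D"
proof
  fix x assume "x \<in> grid D"
  then obtain i j :: nat where x: "x = (real i / real D, real j / real D)" unfolding grid_def by blast
  show "x \<in> grid_Z D" unfolding grid_Z_def
    by (rule CollectI, rule exI[of _ "int i"], rule exI[of _ "int j"]) (simp add: x)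
qed

lemma grid_bounds:
  assumes "x \<in> grid D"
  shows "0 \<le> fst x \<and> fst x \<le> 1 \<and> 0 \<le> snd x \<and> snd x \<le> 1"
proof -
  obtain i j :: nat where x: "x = (real i / real D, real j / real D)" and ij: "i < D" "j < D"
    using assms unfolding grid_def by blast
  have "real i / real D \<le> 1" "real j / real D \<le> 1" using ij by (auto simp: divide_le_eq)
  thus ?thesis by (simp add: x)
qed

lemma sq_le_abs: "\<bar>t::real\<bar> \<le> 1 \<Longrightarrow> t ^ 2 \<le> \<bar>t\<bar>"
proof -
  assume h: "\<bar>t\<bar> \<le> 1"
  have "t ^ 2 = \<bar>t\<bar> * \<bar>t\<bar>" by (simp add: power2_eq_square abs_mult_self_eq)
  also have "\<dots> \<le> \<bar>t\<bar> * 1" by (rule mult_left_mono[OF h]) simp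
  finally show ?thesis by simp
qed

lemma sq_le_l1:
  assumes "x \<in> grid D" "y \<in> grid D"
  shows "sqdist2 x y \<le> l1dist x y"
proof -
  have "\<bar>fst x - fst y\<bar> \<le> 1" "\<bar>snd x - snd y\<bar> \<le> 1"
    using grid_bounds[OF assms(1)] grid_bounds[OF assms(2)] by auto
  thus ?thesis unfolding sqdist2_def l1dist_def using sq_le_abs by (meson add_mono)
qed

lemma sq_ident:
  "sqdist2 a y - sqdist2 a x = sqdist2 x y + 2 * (fst x - fst y) * (fst a - fst x) + 2 * (snd x - snd y) * (snd a - snd x)"
  unfolding sqdist2_def by (simp add: power2_eq_square algebra_simps)

lemma key:
  fixes D :: nat and \<sigma> :: real and p q :: "real \<times> real \<Rightarrow> real" and \<gamma> :: "(real \<times> real) \<times> (real \<times> real) \<Rightarrow> real"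
  assumes D: "D > 0" and \<sigma>: "\<sigma> > 0"
    and \<gamma>0: "\<forall>x\<in>grid D. \<forall>y\<in>grid D. \<gamma> (x,y) \<ge> 0"
    and m1: "\<forall>x\<in>grid D. (\<Sum>y\<in>grid D. \<gamma> (x,y)) = p x"
    and m2: "\<forall>y\<in>grid D. (\<Sum>x\<in>grid D. \<gamma> (x,y)) = q y"
  shows "KL (Htilde D \<sigma> p) (Htilde D \<sigma> q) (grid_Z D) \<le> (\<Sum>(x,y)\<in>grid D \<times> grid D. \<gamma> (x,y) * l1dist x y) / (2 * \<sigma>^2)"
proof -
  define s where "s = 2 * \<sigma>^2"
  have s: "s > 0" using \<sigma> by (simp add: s_def)
  define Z where "Z = gaussZ D \<sigma>"
  let ?e = "\<lambda>d. exp (- sqdist2 d (0,0) / s)"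
  have Zi: "Z = infsum ?e (grid_Z D)" unfolding Z_def gaussZ_def s_def ..
  have O: "(0,0) \<in> grid_Z D" unfolding grid_Z_def
    by (rule CollectI, rule exI[of _ 0], rule exI[of _ 0]) simp
  have Z1: "Z \<ge> 1"
  proof -
    have "sum ?e {(0,0)} \<le> infsum ?e (grid_Z D)"
      by (rule finite_sum_le_infsum[OF gauss_moments(1)[OF D s]]) (use O in auto)
    thus ?thesis by (simp add: Zi sqdist2_def)
  qed
  define G where "G = grid D"
  have finG: "finite G" using grid_finite G_def by simp
  have \<gamma>G: "\<gamma> xy \<ge> 0" if "xy \<in> G \<times> G" for xy using \<gamma>0 that G_def by auto
  define g where "g = (\<lambda>a b. exp (- sqdist2 a b / s))"
  define c where "c = (\<lambda>xy a. sqdist2 (fst xy) (snd xy) + 2 * (fst (fst xy) - fst (snd xy)) * (fst a - fst (fst xy))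
                    + 2 * (snd (fst xy) - snd (snd xy)) * (snd a - snd (fst xy)))"
  define Bf where "Bf = (\<lambda>a. \<Sum>xy\<in>G\<times>G. \<gamma> xy / (Z * s) * (g a (fst xy) * c xy a))"
  define T where "T = (\<Sum>xy\<in>G\<times>G. \<gamma> xy * sqdist2 (fst xy) (snd xy) / s)"
  have Bsum: "(Bf has_sum T) (grid_Z D)"
    unfolding Bf_def T_def
  proof (rule has_sum_finsum)
    show "finite (G \<times> G)" using finG by simp
    fix xy assume xy: "xy \<in> G \<times> G"
    have x: "fst xy \<in> grid_Z D" using xy grid_sub[of D] G_def by auto
    have "((\<lambda>a. \<gamma> xy / (Z * s) * (g a (fst xy) * c xy a)) has_sum (\<gamma> xy / (Z * s) * (sqdist2 (fst xy) (snd xy) * Z))) (grid_Z D)"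
      unfolding g_def c_def
      by (rule has_sum_cmult_right, rule gauss_shift[OF D s x, folded Zi])
    moreover have "\<gamma> xy / (Z * s) * (sqdist2 (fst xy) (snd xy) * Z) = \<gamma> xy * sqdist2 (fst xy) (snd xy) / s"
      using Z1 s by (simp add: field_simps)
    ultimately show "((\<lambda>a. \<gamma> xy / (Z * s) * (g a (fst xy) * c xy a)) has_sum (\<gamma> xy * sqdist2 (fst xy) (snd xy) / s)) (grid_Z D)"
      by simp
  qed
  have HT: "Htilde D \<sigma> f a = (\<Sum>a'\<in>G. 1 / Z * g a a' * f a')" for f a
    unfolding Htilde_def Z_def g_def s_def G_def ..
  have Hp: "Htilde D \<sigma> p a = (\<Sum>xy\<in>G\<times>G. \<gamma> xy * (g a (fst xy) / Z))" for a
  proof -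
    have "Htilde D \<sigma> p a = (\<Sum>x\<in>G. \<Sum>y\<in>G. \<gamma> (x,y) * (g a x / Z))"
      unfolding HT
    proof (rule sum.cong[OF refl])
      fix x assume "x \<in> G"
      hence "p x = (\<Sum>y\<in>G. \<gamma> (x,y))" using m1 G_def by auto
      thus "1 / Z * g a x * p x = (\<Sum>y\<in>G. \<gamma> (x,y) * (g a x / Z))"
        by (simp add: sum_distrib_left sum_distrib_right mult.commute)
    qed
    also have "\<dots> = (\<Sum>(x,y)\<in>G\<times>G. \<gamma> (x,y) * (g a x / Z))" by (rule sum.cartesian_product)
    also have "\<dots> = (\<Sum>xy\<in>G\<times>G. \<gamma> xy * (g a (fst xy) / Z))" by (rule sum.cong) auto
    finally show ?thesis .
  qed
  have Hq: "Htilde D \<sigma> q a = (\<Sum>xy\<in>G\<times>G. \<gamma> xy * (g a (snd xy) / Z))" for a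
  proof -
    have "Htilde D \<sigma> q a = (\<Sum>y\<in>G. \<Sum>x\<in>G. \<gamma> (x,y) * (g a y / Z))"
      unfolding HT
    proof (rule sum.cong[OF refl])
      fix y assume "y \<in> G"
      hence "q y = (\<Sum>x\<in>G. \<gamma> (x,y))" using m2 G_def by auto
      thus "1 / Z * g a y * q y = (\<Sum>x\<in>G. \<gamma> (x,y) * (g a y / Z))"
        by (simp add: sum_distrib_left sum_distrib_right mult.commute)
    qed
    also have "\<dots> = (\<Sum>x\<in>G. \<Sum>y\<in>G. \<gamma> (x,y) * (g a y / Z))" by (rule sum.swap)
    also have "\<dots> = (\<Sum>(x,y)\<in>G\<times>G. \<gamma> (x,y) * (g a y / Z))" by (rule sum.cartesian_product)
    also have "\<dots> = (\<Sum>xy\<in>G\<times>G. \<gamma> xy * (g a (snd xy) / Z))" by (rule sum.cong) auto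
    finally show ?thesis .
  qed
  have pw: "Htilde D \<sigma> p a * ln (Htilde D \<sigma> p a / Htilde D \<sigma> q a) \<le> Bf a" for a
  proof -
    have gpos: "g a b > 0" for b by (simp add: g_def)
    have "Htilde D \<sigma> p a * ln (Htilde D \<sigma> p a / Htilde D \<sigma> q a)
        \<le> (\<Sum>xy\<in>G\<times>G. \<gamma> xy * (g a (fst xy) / Z) * ln ((g a (fst xy) / Z) / (g a (snd xy) / Z)))"
      unfolding Hp Hq
      by (rule log_sum[where w=\<gamma> and \<alpha>="\<lambda>xy. g a (fst xy) / Z" and \<beta>="\<lambda>xy. g a (snd xy) / Z"])
         (use finG \<gamma>G gpos Z1 in auto)
    also have "\<dots> = Bf a" unfolding Bf_def
    proof (rule sum.cong[OF refl])
      fix xy :: "(real \<times> real) \<times> (real \<times> real)"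
      have "ln ((g a (fst xy) / Z) / (g a (snd xy) / Z)) = ln (g a (fst xy) / g a (snd xy))"
        using Z1 by simp
      also have "\<dots> = (sqdist2 a (snd xy) - sqdist2 a (fst xy)) / s"
        unfolding g_def exp_diff[symmetric] ln_exp by (simp add: diff_divide_distrib)
      also have "\<dots> = c xy a / s" unfolding c_def sq_ident ..
      finally have l: "ln ((g a (fst xy) / Z) / (g a (snd xy) / Z)) = c xy a / s" .
      show "\<gamma> xy * (g a (fst xy) / Z) * ln ((g a (fst xy) / Z) / (g a (snd xy) / Z)) =
            \<gamma> xy / (Z * s) * (g a (fst xy) * c xy a)"
        unfolding l using Z1 s by (simp add: field_simps)
    qed
    finally show ?thesis .
  qed
  have T0: "T \<ge> 0" unfolding T_def
    by (rule sum_nonneg) (use \<gamma>G s in \<open>auto simp: sqdist2_def\<close>)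
  have KLT: "KL (Htilde D \<sigma> p) (Htilde D \<sigma> q) (grid_Z D) \<le> T"
  proof (cases "(\<lambda>a. Htilde D \<sigma> p a * ln (Htilde D \<sigma> p a / Htilde D \<sigma> q a)) summable_on grid_Z D")
    case True
    have "KL (Htilde D \<sigma> p) (Htilde D \<sigma> q) (grid_Z D) \<le> infsum Bf (grid_Z D)"
      unfolding KL_def by (rule infsum_mono[OF True]) (use Bsum pw in \<open>auto simp: has_sum_iff\<close>)
    also have "\<dots> = T" using Bsum by (simp add: has_sum_iff)
    finally show ?thesis .
  next
    case False
    thus ?thesis unfolding KL_def using T0 by (simp add: infsum_not_exists)
  qed
  also have "T \<le> (\<Sum>xy\<in>G\<times>G. \<gamma> xy * l1dist (fst xy) (snd xy) / s)"
    unfolding T_def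
  proof (rule sum_mono)
    fix xy assume xy: "xy \<in> G \<times> G"
    have "sqdist2 (fst xy) (snd xy) \<le> l1dist (fst xy) (snd xy)" using xy sq_le_l1 G_def by auto
    hence "\<gamma> xy * sqdist2 (fst xy) (snd xy) \<le> \<gamma> xy * l1dist (fst xy) (snd xy)"
      by (rule mult_left_mono) (rule \<gamma>G[OF xy])
    thus "\<gamma> xy * sqdist2 (fst xy) (snd xy) / s \<le> \<gamma> xy * l1dist (fst xy) (snd xy) / s"
      using s by (simp add: divide_right_mono)
  qed
  also have "\<dots> = (\<Sum>(x,y)\<in>grid D \<times> grid D. \<gamma> (x,y) * l1dist x y) / (2 * \<sigma>^2)"
    unfolding s_def G_def sum_divide_distrib[symmetric] by (rule arg_cong[where f="\<lambda>t. t / _"], rule sum.cong) auto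
  finally show ?thesis .
qed

theorem lemma9:
  fixes D :: nat and \<sigma> :: real and p q :: "real \<times> real \<Rightarrow> real"
  assumes "D > 0" and "\<sigma> > 0"
    and "\<forall>a\<in>grid D. p a \<ge> 0" and "(\<Sum>a\<in>grid D. p a) = 1"
    and "\<forall>a\<in>grid D. q a \<ge> 0" and "(\<Sum>a\<in>grid D. q a) = 1"
  shows "KL (Htilde D \<sigma> p) (Htilde D \<sigma> q) (grid_Z D) \<le> EMD D p q / (2 * \<sigma>^2)"
proof -
  have s: "2 * \<sigma>^2 > 0" using assms(2) by simp
  let ?K = "KL (Htilde D \<sigma> p) (Htilde D \<sigma> q) (grid_Z D)"
  define S where "S = {(\<Sum>(x,y)\<in>grid D \<times> grid D. \<gamma> (x,y) * l1dist x y) | \<gamma>.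
      (\<forall>x\<in>grid D. \<forall>y\<in>grid D. \<gamma> (x,y) \<ge> 0) \<and>
      (\<forall>x\<in>grid D. (\<Sum>y\<in>grid D. \<gamma> (x,y)) = p x) \<and>
      (\<forall>y\<in>grid D. (\<Sum>x\<in>grid D. \<gamma> (x,y)) = q y)}"
  have E: "EMD D p q = Inf S" unfolding EMD_def S_def ..
  have ne: "S \<noteq> {}"
  proof -
    define \<gamma> where "\<gamma> = (\<lambda>xy :: (real \<times> real) \<times> (real \<times> real). p (fst xy) * q (snd xy))"
    have "(\<Sum>(x,y)\<in>grid D \<times> grid D. \<gamma> (x,y) * l1dist x y) \<in> S"
      unfolding S_def
    proof (rule CollectI, rule exI[of _ \<gamma>], intro conjI refl ballI)
      fix x y assume "x \<in> grid D" "y \<in> grid D"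
      thus "0 \<le> \<gamma> (x, y)" using assms(3,5) by (simp add: \<gamma>_def)
    next
      fix x assume "x \<in> grid D"
      show "(\<Sum>y\<in>grid D. \<gamma> (x, y)) = p x" using assms(6) by (simp add: \<gamma>_def sum_distrib_left[symmetric])
    next
      fix y assume "y \<in> grid D"
      show "(\<Sum>x\<in>grid D. \<gamma> (x, y)) = q y" using assms(4) by (simp add: \<gamma>_def sum_distrib_right[symmetric])
    qed
    thus ?thesis by blast
  qed
  have "?K * (2 * \<sigma>^2) \<le> Inf S"
  proof (rule cInf_greatest[OF ne])
    fix c assume "c \<in> S"
    then obtain \<gamma> where c: "c = (\<Sum>(x,y)\<in>grid D \<times> grid D. \<gamma> (x,y) * l1dist x y)"
      and h: "\<forall>x\<in>grid D. \<forall>y\<in>grid D. \<gamma> (x,y) \<ge> 0"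
        "\<forall>x\<in>grid D. (\<Sum>y\<in>grid D. \<gamma> (x,y)) = p x"
        "\<forall>y\<in>grid D. (\<Sum>x\<in>grid D. \<gamma> (x,y)) = q y"
      unfolding S_def by blast
    have "?K \<le> c / (2 * \<sigma>^2)" unfolding c by (rule key[OF assms(1,2) h])
    thus "?K * (2 * \<sigma>^2) \<le> c" using s by (simp add: pos_le_divide_eq)
  qed
  thus ?thesis unfolding E using s by (simp add: pos_le_divide_eq)
qed

end
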